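(* Let $n\ge2$, $s>\frac n2-1$ and $\max\{\frac14,\frac18n+\frac14-\frac14s\}<\rho<\frac12$. Then there is a constant $C$ such that for all $(\xi,\tau)\in\mathbb{R}^n\times\mathbb{R}$, $$\Theta_2(\xi,\tau)=\int_{\mathbb{R}^{n+1}}\frac{(1+|\zeta|)^{-s}(1+|\xi-\zeta|)^{-s}}{(1+|\tau_1+\zeta^2|)^{2\rho}(1+|\tau-\tau_1+(\xi-\zeta)^2|)^{2\rho}}d\tau_1d\zeta\le C.$$
   Context: $\zeta\in\mathbb{R}^n$, $\tau_1\in\mathbb{R}$; $\zeta^2=|\zeta|^2$, $(\xi-\zeta)^2=|\xi-\zeta|^2$. *)

theory Defs
  imports "HOL-Analysis.Analysis"
begin

definition Theta2_integrand ::
  "real \<Rightarrow> real \<Rightarrow> real ^ 'n \<Rightarrow> real \<Rightarrow> (real ^ 'n) \<times> real \<Rightarrow> real" where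
  "Theta2_integrand s \<rho> \<xi> \<tau> p =
     (let \<zeta> = fst p; \<tau>\<^sub>1 = snd p in
       ((1 + norm \<zeta>) powr (-s) * (1 + norm (\<xi> - \<zeta>)) powr (-s)) /
       ((1 + \<bar>\<tau>\<^sub>1 + (norm \<zeta>)\<^sup>2\<bar>) powr (2 * \<rho>) *
        (1 + \<bar>\<tau> - \<tau>\<^sub>1 + (norm (\<xi> - \<zeta>))\<^sup>2\<bar>) powr (2 * \<rho>)))"

definition Theta2 :: "real \<Rightarrow> real \<Rightarrow> real ^ 'n \<Rightarrow> real \<Rightarrow> ennreal" where
  "Theta2 s \<rho> \<xi> \<tau> = (\<integral>\<^sup>+ p. ennreal (Theta2_integrand s \<rho> \<xi> \<tau> p) \<partial>lborel)"

end

theory Submission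
  imports Defs
begin

lemma shell1d:
  fixes a m T c z :: real
  assumes m: "m \<ge> 0" and c: "c > 1" and T: "T > 0" and aT: "a + T > 0"
  shows "emeasure lborel {y. a - m < (y-z)^2 \<and> (y-z)^2 < a+T-m \<and> m \<le> (c-1)*(y-z)^2}
           \<le> ennreal (2* sqrt c*T/sqrt(a+T))"
proof (cases "{y. a - m < (y-z)^2 \<and> (y-z)^2 < a+T-m \<and> m \<le> (c-1)*(y-z)^2} = {}")
  case True show ?thesis unfolding True by simp
next
  case False
  then obtain y0 where y0: "a - m < (y0-z)^2" "(y0-z)^2 < a+T-m" "m \<le> (c-1)*(y0-z)^2" by blast
  define B where "B = a+T-m"
  define b where "b = max (a-m) 0"
  have Bpos: "B > 0" using y0 B_def by (smt (verit) zero_le_power2)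
  have cB: "a + T \<le> c * B"
  proof (cases "m \<ge> (c-1)*(a+T)/c")
    case True
    have "(c-1)*(a+T)/c \<le> (c-1)*(y0-z)^2" using True y0(3) by linarith
    then have "(c-1)*((a+T)/c) \<le> (c-1)*(y0-z)^2" by simp
    then have "(a+T)/c \<le> (y0-z)^2" using c by (meson diff_gt_0_iff_gt mult_left_le_imp_le)
    then have "(a+T)/c \<le> B" using y0(2) B_def by linarith
    then show ?thesis using c by (simp add: field_simps)
  next
    case False
    then have "m * c < (c-1)*(a+T)" using c by (simp add: field_simps)
    then show ?thesis unfolding B_def by (simp add: algebra_simps)
  qed
  have bB: "0 \<le> b" "b \<le> B" "B - b \<le> T" using Bpos T unfolding b_def B_def by auto
  have sub: "{y. a - m < (y-z)^2 \<and> (y-z)^2 < a+T-m \<and> m \<le> (c-1)*(y-z)^2}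
     \<subseteq> {z - sqrt B .. z - sqrt b} \<union> {z + sqrt b .. z + sqrt B}"
  proof
    fix y assume "y \<in> {y. a - m < (y-z)^2 \<and> (y-z)^2 < a+T-m \<and> m \<le> (c-1)*(y-z)^2}"
    then have h: "b \<le> (y-z)^2" "(y-z)^2 \<le> B" unfolding b_def B_def by auto
    have "sqrt b \<le> \<bar>y-z\<bar>" using h(1) by (metis real_sqrt_abs real_sqrt_le_mono)
    moreover have "\<bar>y-z\<bar> \<le> sqrt B" using h(2) by (metis real_sqrt_abs real_sqrt_le_mono)
    ultimately show "y \<in> {z - sqrt B .. z - sqrt b} \<union> {z + sqrt b .. z + sqrt B}"
      by (cases "y \<ge> z") auto
  qed
  have sbB: "sqrt b \<le> sqrt B" using bB by simp
  have "emeasure lborel {y. a - m < (y-z)^2 \<and> (y-z)^2 < a+T-m \<and> m \<le> (c-1)*(y-z)^2}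
     \<le> emeasure lborel ({z - sqrt B .. z - sqrt b} \<union> {z + sqrt b .. z + sqrt B})"
    by (rule emeasure_mono[OF sub]) auto
  also have "\<dots> \<le> emeasure lborel {z - sqrt B .. z - sqrt b} + emeasure lborel {z + sqrt b .. z + sqrt B}"
    by (rule emeasure_subadditive) auto
  also have "\<dots> = ennreal (2 * (sqrt B - sqrt b))"
    using sbB by (simp add: ennreal_plus[symmetric] del: ennreal_plus)
  also have "\<dots> \<le> ennreal (2* sqrt c*T/sqrt(a+T))"
  proof (rule ennreal_leI)
    have "(sqrt B - sqrt b) * sqrt B \<le> (sqrt B - sqrt b) * (sqrt B + sqrt b)"
      using sbB bB by (intro mult_left_mono) auto
    also have "\<dots> = B - b" using bB by (simp add: algebra_simps)
    finally have 1: "(sqrt B - sqrt b) * sqrt B \<le> T" using bB by linarith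
    have sB: "sqrt B > 0" using Bpos by simp
    have 2: "sqrt (a+T) \<le> sqrt c * sqrt B" using cB by (metis real_sqrt_le_mono real_sqrt_mult)
    have "sqrt B - sqrt b \<le> T / sqrt B" using 1 sB by (simp add: field_simps)
    also have "\<dots> \<le> sqrt c * T / sqrt (a+T)"
      using 2 sB aT T by (simp add: field_simps)
    finally show "2 * (sqrt B - sqrt b) \<le> 2* sqrt c*T/sqrt(a+T)" by simp
  qed
  finally show ?thesis .
qed

lemma slab_sets:
  fixes A :: "'i set" and i :: 'i and p q :: "'i \<Rightarrow> real"
  assumes A: "finite A"
  shows "{f \<in> space (PiM (insert i A) (\<lambda>_. lborel)). (\<forall>j\<in>A. \<bar>f j - q j\<bar> \<le> r) \<and>
        a < (\<Sum>j\<in>insert i A. (f j - p j)^2) \<and> (\<Sum>j\<in>insert i A. (f j - p j)^2) < a + T \<and>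
        (\<Sum>j\<in>insert i A. (f j - p j)^2) \<le> c * (f i - p i)^2} \<in> sets (PiM (insert i A) (\<lambda>_. lborel::real measure))"
proof -
  define M where "M = PiM (insert i A) (\<lambda>_. lborel::real measure)"
  have cm: "(\<lambda>x. x j) \<in> borel_measurable M" if "j \<in> insert i A" for j
    unfolding M_def using measurable_component_singleton[OF that, of "\<lambda>_. lborel::real measure"]
    by (simp cong: measurable_cong_sets)
  have sm: "(\<lambda>x. \<Sum>j\<in>insert i A. (x j - p j)^2) \<in> borel_measurable M"
    using cm by (intro borel_measurable_sum) auto
  have [measurable]: "(\<lambda>x. x i) \<in> borel_measurable M" using cm by auto
  have "{f \<in> space M. (\<forall>j\<in>A. \<bar>f j - q j\<bar> \<le> r) \<and>
        a < (\<Sum>j\<in>insert i A. (f j - p j)^2) \<and> (\<Sum>j\<in>insert i A. (f j - p j)^2) < a + T \<and>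
        (\<Sum>j\<in>insert i A. (f j - p j)^2) \<le> c * (f i - p i)^2} \<in> sets M"
  proof (intro sets.sets_Collect_conj sets.sets_Collect_finite_All)
    fix j assume "j \<in> A"
    then have [measurable]: "(\<lambda>x. x j) \<in> borel_measurable M" using cm by auto
    show "{x \<in> space M. \<bar>x j - q j\<bar> \<le> r} \<in> sets M" by measurable
  qed (use A sm in measurable)
  then show ?thesis unfolding M_def .
qed

lemma slab_PiM:
  fixes A :: "'i set" and i :: 'i and p q :: "'i \<Rightarrow> real"
  assumes A: "finite A" "i \<notin> A" and c: "c > 1" and T: "T > 0" and aT: "a + T > 0" and r: "r > 0"
  shows "emeasure (PiM (insert i A) (\<lambda>_. lborel))
     {f \<in> space (PiM (insert i A) (\<lambda>_. lborel)). (\<forall>j\<in>A. \<bar>f j - q j\<bar> \<le> r) \<and>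
        a < (\<Sum>j\<in>insert i A. (f j - p j)^2) \<and> (\<Sum>j\<in>insert i A. (f j - p j)^2) < a + T \<and>
        (\<Sum>j\<in>insert i A. (f j - p j)^2) \<le> c * (f i - p i)^2}
   \<le> ennreal ((2 * min r (sqrt (a+T)))^card A * (2 * sqrt c * T / sqrt (a+T)))"
proof -
  interpret product_sigma_finite "\<lambda>_. lborel::real measure" by standard
  define M where "M = PiM (insert i A) (\<lambda>_. lborel::real measure)"
  define S where "S = {f \<in> space M. (\<forall>j\<in>A. \<bar>f j - q j\<bar> \<le> r) \<and>
        a < (\<Sum>j\<in>insert i A. (f j - p j)^2) \<and> (\<Sum>j\<in>insert i A. (f j - p j)^2) < a + T \<and>
        (\<Sum>j\<in>insert i A. (f j - p j)^2) \<le> c * (f i - p i)^2}"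
  define R where "R = sqrt (a+T)"
  define L where "L = 2 * sqrt c * T / sqrt (a+T)"
  define Bx where "Bx = (\<lambda>j. {max (q j - r) (p j - R) .. min (q j + r) (p j + R)})"
  have S_sets: "S \<in> sets M" unfolding S_def M_def by (rule slab_sets[OF A(1)])
  have "emeasure M S = (\<integral>\<^sup>+f. indicator S f \<partial>M)" using S_sets by simp
  also have "\<dots> = (\<integral>\<^sup>+x. \<integral>\<^sup>+y. indicator S (x(i:=y)) \<partial>lborel \<partial>PiM A (\<lambda>_. lborel))"
    unfolding M_def using A S_sets[unfolded M_def] by (intro product_nn_integral_insert) auto
  also have "\<dots> \<le> (\<integral>\<^sup>+x. ennreal L * indicator (PiE A Bx) x \<partial>PiM A (\<lambda>_. lborel))"
  proof (rule nn_integral_mono)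
    fix x assume x: "x \<in> space (PiM A (\<lambda>_. lborel::real measure))"
    define m where "m = (\<Sum>j\<in>A. (x j - p j)^2)"
    have m0: "m \<ge> 0" unfolding m_def by (simp add: sum_nonneg)
    have sumeq: "(\<Sum>j\<in>insert i A. ((x(i:=y)) j - p j)^2) = (y - p i)^2 + m" for y
    proof -
      have "(\<Sum>j\<in>A. ((x(i:=y)) j - p j)^2) = m" unfolding m_def using A by (intro sum.cong) auto
      then show ?thesis using A by simp
    qed
    have memS: "x(i:=y) \<in> S \<Longrightarrow> x \<in> PiE A Bx \<and>
         y \<in> {y. a - m < (y - p i)^2 \<and> (y - p i)^2 < a+T-m \<and> m \<le> (c-1)*(y - p i)^2}" for y
    proof -
      assume "x(i:=y) \<in> S"
      then have h0: "(\<forall>j\<in>A. \<bar>(x(i:=y)) j - q j\<bar> \<le> r) \<and>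
        a < (\<Sum>j\<in>insert i A. ((x(i:=y)) j - p j)^2) \<and> (\<Sum>j\<in>insert i A. ((x(i:=y)) j - p j)^2) < a + T \<and>
        (\<Sum>j\<in>insert i A. ((x(i:=y)) j - p j)^2) \<le> c * ((x(i:=y)) i - p i)^2"
        unfolding S_def mem_Collect_eq by blast
      have e1: "(\<forall>j\<in>A. \<bar>(x(i:=y)) j - q j\<bar> \<le> r) = (\<forall>j\<in>A. \<bar>x j - q j\<bar> \<le> r)"
        using A by auto
      have h: "\<forall>j\<in>A. \<bar>x j - q j\<bar> \<le> r" "a < (y - p i)^2 + m" "(y - p i)^2 + m < a + T"
        "(y - p i)^2 + m \<le> c * (y - p i)^2"
        using h0 unfolding sumeq e1 by auto
      have "x j \<in> Bx j" if j: "j \<in> A" for j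
      proof -
        have "(x j - p j)^2 \<le> m" unfolding m_def using A j by (intro member_le_sum) auto
        moreover have "R^2 = a + T" unfolding R_def using aT by simp
        moreover have "(y - p i)^2 \<ge> 0" by simp
        ultimately have "(x j - p j)^2 \<le> R^2" using h by linarith
        then have "\<bar>x j - p j\<bar> \<le> R" unfolding R_def using aT
          by (metis abs_of_nonneg less_eq_real_def real_sqrt_ge_zero power2_le_imp_le real_sqrt_abs real_sqrt_le_mono)
        then show ?thesis using h(1) j unfolding Bx_def by auto
      qed
      moreover have "x \<in> extensional A" using x by (simp add: space_PiM PiE_def)
      ultimately have "x \<in> PiE A Bx" by (simp add: PiE_def)
      then show ?thesis using h by (auto simp: algebra_simps)
    qed
    show "(\<integral>\<^sup>+y. indicator S (x(i:=y)) \<partial>lborel) \<le> ennreal L * indicator (PiE A Bx) x"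
    proof (cases "x \<in> PiE A Bx")
      case True
      have "(\<integral>\<^sup>+y. indicator S (x(i:=y)) \<partial>lborel) \<le>
          (\<integral>\<^sup>+y. indicator {y. a - m < (y - p i)^2 \<and> (y - p i)^2 < a+T-m \<and> m \<le> (c-1)*(y - p i)^2} y \<partial>lborel)"
        by (intro nn_integral_mono) (auto simp: indicator_def dest: memS)
      also have "\<dots> = emeasure lborel {y. a - m < (y - p i)^2 \<and> (y - p i)^2 < a+T-m \<and> m \<le> (c-1)*(y - p i)^2}"
        by (intro nn_integral_indicator) measurable
      also have "\<dots> \<le> ennreal L" unfolding L_def by (rule shell1d[OF m0 c T aT])
      finally show ?thesis using True by simp
    next
      case False
      then have "indicator S (x(i:=y)) = (0::ennreal)" for y using memS by (auto simp: indicator_def)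
      then show ?thesis by simp
    qed
  qed
  also have "\<dots> = ennreal L * emeasure (PiM A (\<lambda>_. lborel)) (PiE A Bx)"
    using A by (intro nn_integral_cmult_indicator sets_PiM_I_finite) (auto simp: Bx_def)
  also have "\<dots> \<le> ennreal L * ennreal ((2 * min r R)^card A)"
  proof (rule mult_left_mono)
    have "emeasure (PiM A (\<lambda>_. lborel)) (PiE A Bx) = (\<Prod>j\<in>A. emeasure lborel (Bx j))"
      using A by (intro emeasure_PiM) (auto simp: Bx_def)
    also have "\<dots> \<le> (\<Prod>j\<in>A. ennreal (2 * min r R))"
    proof (intro prod_mono_ennreal)
      fix j assume "j \<in> A"
      show "emeasure lborel (Bx j) \<le> ennreal (2 * min r R)"
        unfolding Bx_def emeasure_lborel_Icc_eq using r aT by (intro ennreal_leI) (auto simp: R_def)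
    qed
    also have "\<dots> = ennreal ((2 * min r R)^card A)" using r aT
      by (simp add: prod_ennreal R_def ennreal_power del: power_mult_distrib)
    finally show "emeasure (PiM A (\<lambda>_. lborel)) (PiE A Bx) \<le> ennreal ((2 * min r R)^card A)" .
  qed simp
  also have "\<dots> = ennreal ((2 * min r R)^card A * L)"
    using r aT T c by (subst ennreal_mult'[symmetric]) (auto simp: L_def R_def mult.commute)
  finally show ?thesis unfolding M_def S_def R_def L_def .
qed

lemma inner_sum_Basis_coord:
  fixes f :: "'a::euclidean_space \<Rightarrow> real"
  assumes "j \<in> Basis"
  shows "(\<Sum>b\<in>Basis. f b *\<^sub>R b) \<bullet> j = f j"
  using assms by (simp add: inner_sum_left inner_Basis if_distrib[of "(*) _"] cong: if_cong)

lemma exists_big_coord: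
  fixes g :: "'i \<Rightarrow> real"
  assumes "finite B" "B \<noteq> {}"
  shows "\<exists>i\<in>B. (\<Sum>j\<in>B. g j) \<le> real (card B) * g i"
proof (rule ccontr)
  assume "\<not> ?thesis"
  then have "\<forall>i\<in>B. real (card B) * g i < (\<Sum>j\<in>B. g j)" by auto
  then have "(\<Sum>i\<in>B. real (card B) * g i) < (\<Sum>i\<in>B. (\<Sum>j\<in>B. g j))"
    using assms by (intro sum_strict_mono) auto
  then show False by (simp add: sum_distrib_left)
qed

lemma shell_measure:
  fixes q p :: "'a::euclidean_space"
  assumes N: "DIM('a) \<ge> 2" and r: "r > 0" and T: "T > 0"
  shows "emeasure lborel (cball q r \<inter> {x. a < (norm (x - p))^2 \<and> (norm (x - p))^2 < a + T})
     \<le> ennreal (DIM('a) * 2^DIM('a) * sqrt DIM('a) * T * r ^ (DIM('a) - 2))"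
proof (cases "a + T > 0")
  case False
  then have "cball q r \<inter> {x. a < (norm (x - p))^2 \<and> (norm (x - p))^2 < a + T} = {}"
    by (auto simp: not_less) (smt (verit) zero_le_power2)
  then show ?thesis by simp
next
  case aT: True
  interpret product_sigma_finite "\<lambda>_. lborel::real measure" by standard
  define n where "n = DIM('a)"
  define R where "R = sqrt (a + T)"
  define X where "X = cball q r \<inter> {x. a < (norm (x - p))^2 \<and> (norm (x - p))^2 < a + T}"
  define P where "P = PiM (Basis::'a set) (\<lambda>_. lborel::real measure)"
  define \<phi> where "\<phi> = (\<lambda>f. \<Sum>b\<in>(Basis::'a set). f b *\<^sub>R b)"
  define S where "S = (\<lambda>i. {f \<in> space (PiM (insert i (Basis - {i})) (\<lambda>_. lborel::real measure)).
        (\<forall>j\<in>Basis - {i}. \<bar>f j - q \<bullet> j\<bar> \<le> r) \<and>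
        a < (\<Sum>j\<in>insert i (Basis - {i}). (f j - p \<bullet> j)^2) \<and>
        (\<Sum>j\<in>insert i (Basis - {i}). (f j - p \<bullet> j)^2) < a + T \<and>
        (\<Sum>j\<in>insert i (Basis - {i}). (f j - p \<bullet> j)^2) \<le> real n * (f i - p \<bullet> i)^2})"
  have Xs: "X \<in> sets borel" unfolding X_def by measurable
  have "emeasure lborel X = emeasure (distr P borel \<phi>) X"
    unfolding P_def \<phi>_def by (subst lborel_eq) rule
  also have "\<dots> = emeasure P (\<phi> -` X \<inter> space P)"
    using Xs unfolding P_def \<phi>_def by (intro emeasure_distr) auto
  also have "\<dots> \<le> emeasure P (\<Union>i\<in>Basis. S i)"
  proof (rule emeasure_mono)
    show "\<phi> -` X \<inter> space P \<subseteq> (\<Union>i\<in>Basis. S i)"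
    proof
      fix f assume f: "f \<in> \<phi> -` X \<inter> space P"
      have coord: "\<phi> f \<bullet> j = f j" if "j \<in> Basis" for j
        unfolding \<phi>_def using that by (rule inner_sum_Basis_coord)
      have nrm: "(norm (\<phi> f - p))^2 = (\<Sum>j\<in>Basis. (f j - p \<bullet> j)^2)"
        unfolding power2_norm_eq_inner
        by (subst euclidean_inner) (auto simp: inner_diff_left coord power2_eq_square intro!: sum.cong)
      have fX: "\<phi> f \<in> X" using f by auto
      obtain i where i: "i \<in> Basis" "(\<Sum>j\<in>Basis. (f j - p \<bullet> j)^2) \<le> real n * (f i - p \<bullet> i)^2"
        using exists_big_coord[of "Basis::'a set" "\<lambda>j. (f j - p \<bullet> j)^2"] unfolding n_def by auto
      have ins: "insert i (Basis - {i}) = Basis" using i by auto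
      have "\<bar>f j - q \<bullet> j\<bar> \<le> r" if "j \<in> Basis" for j
      proof -
        have "\<bar>(\<phi> f - q) \<bullet> j\<bar> \<le> norm (\<phi> f - q)" using that by (rule Basis_le_norm)
        also have "\<dots> \<le> r" using fX unfolding X_def by (auto simp: dist_norm norm_minus_commute)
        finally show ?thesis using that by (simp add: inner_diff_left coord)
      qed
      moreover have "f \<in> space (PiM (insert i (Basis - {i})) (\<lambda>_. lborel::real measure))"
        using f unfolding ins P_def by auto
      ultimately have "f \<in> S i" using fX i nrm unfolding S_def ins X_def by auto
      then show "f \<in> (\<Union>i\<in>Basis. S i)" using i by auto
    qed
    have "S i \<in> sets P" if "i \<in> Basis" for i
    proof -
      have ins: "insert i (Basis - {i}) = Basis" using that by auto
      have "S i \<in> sets (PiM (insert i (Basis - {i})) (\<lambda>_. lborel::real measure))"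
        unfolding S_def by (rule slab_sets) simp
      then show ?thesis unfolding P_def ins .
    qed
    then show "(\<Union>i\<in>Basis. S i) \<in> sets P" by auto
  qed
  also have "\<dots> \<le> (\<Sum>i\<in>Basis. emeasure P (S i))"
  proof (rule emeasure_subadditive_finite)
    show "S ` Basis \<subseteq> sets P"
    proof
      fix Y assume "Y \<in> S ` Basis"
      then obtain i where i: "i \<in> Basis" "Y = S i" by auto
      have ins: "insert i (Basis - {i}) = Basis" using i by auto
      have "S i \<in> sets (PiM (insert i (Basis - {i})) (\<lambda>_. lborel::real measure))"
        unfolding S_def by (rule slab_sets) simp
      then show "Y \<in> sets P" unfolding P_def ins i(2) .
    qed
  qed simp
  also have "\<dots> \<le> (\<Sum>i\<in>(Basis::'a set). ennreal ((2 * min r R)^(n-1) * (2 * sqrt n * T / R)))"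
  proof (rule sum_mono)
    fix i :: 'a assume i: "i \<in> Basis"
    have ins: "insert i (Basis - {i}) = Basis" using i by auto
    have cd: "card (Basis - {i}) = n - 1" using i unfolding n_def by simp
    have "emeasure (PiM (insert i (Basis - {i})) (\<lambda>_. lborel)) (S i)
        \<le> ennreal ((2 * min r (sqrt (a+T)))^card (Basis - {i}) * (2 * sqrt (real n) * T / sqrt (a+T)))"
      unfolding S_def using N aT T r unfolding n_def by (intro slab_PiM) auto
    then show "emeasure P (S i) \<le> ennreal ((2 * min r R)^(n-1) * (2 * sqrt n * T / R))"
      unfolding P_def ins cd R_def .
  qed
  also have "\<dots> = ennreal (n * ((2 * min r R)^(n-1) * (2 * sqrt n * T / R)))"
    unfolding n_def by (simp add: ennreal_of_nat_eq_real_of_nat ennreal_mult'[symmetric])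
  also have "\<dots> \<le> ennreal (n * 2^n * sqrt n * T * r ^ (n - 2))"
  proof (rule ennreal_leI)
    have Rp: "R > 0" unfolding R_def using aT by simp
    have key: "min r R ^ (n-1) / R \<le> r ^ (n-2)"
    proof (cases "r \<le> R")
      case True
      have "min r R ^ (n-1) / R = r^(n-1) / R" using True by simp
      also have "\<dots> \<le> r^(n-1) / r" using True r Rp by (intro divide_left_mono) auto
      also have "\<dots> = r^(n-2)" using N r unfolding n_def
        by (metis Suc_diff_Suc Suc_1 Suc_le_lessD diff_Suc_1 nonzero_mult_div_cancel_left power_Suc order_less_irrefl)
      finally show ?thesis .
    next
      case False
      have "min r R ^ (n-1) / R = R^(n-1) / R" using False by simp
      also have "\<dots> = R^(n-2)" using N Rp unfolding n_def
        by (metis Suc_diff_Suc Suc_1 Suc_le_lessD diff_Suc_1 nonzero_mult_div_cancel_left power_Suc order_less_irrefl)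
      also have "\<dots> \<le> r^(n-2)" using False Rp by (intro power_mono) auto
      finally show ?thesis .
    qed
    have n1: "(2::real)^(n-1) * 2 = 2^n" using N unfolding n_def
      by (metis Suc_diff_1 Suc_le_lessD less_le_trans pos2 power_Suc2)
    have "(2 * min r R)^(n-1) * (2 * sqrt n * T / R) = 2^(n-1) * 2 * sqrt n * T * (min r R ^ (n-1) / R)"
      by (simp add: power_mult_distrib field_simps)
    also have "\<dots> \<le> 2^(n-1) * 2 * sqrt n * T * r^(n-2)"
      using key T by (intro mult_left_mono) auto
    also have "\<dots> = 2^n * sqrt n * T * r^(n-2)" using n1 by simp
    finally have K: "(2 * min r R)^(n-1) * (2 * sqrt n * T / R) \<le> 2^n * sqrt n * T * r^(n-2)" .
    have "n * ((2 * min r R)^(n-1) * (2 * sqrt n * T / R)) \<le> n * (2^n * sqrt n * T * r^(n-2))"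
      using K by (rule mult_left_mono) simp
    then show "n * ((2 * min r R)^(n-1) * (2 * sqrt n * T / R)) \<le> n * 2^n * sqrt n * T * r ^ (n - 2)"
      by (simp add: mult.assoc)
  qed
  finally show ?thesis unfolding X_def n_def .
qed

lemma geom_ennreal:
  fixes x M :: real
  assumes "0 \<le> x" "x < 1" "0 \<le> M"
  shows "(\<Sum>k. ennreal (M * x^k)) = ennreal (M / (1 - x))"
proof -
  have s: "summable (\<lambda>k. M * x^k)" using assms by (intro summable_mult summable_geometric) auto
  have "(\<Sum>k. ennreal (M * x^k)) = ennreal (\<Sum>k. M * x^k)"
    using assms s by (intro suminf_ennreal2) auto
  also have "(\<Sum>k. M * x^k) = M * (1 / (1 - x))"
    using assms by (subst suminf_mult) (auto intro: summable_geometric simp: suminf_geometric)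
  finally show ?thesis by simp
qed

lemma dyadic_bound:
  fixes t e :: real
  assumes t: "t \<ge> 0" and e: "e \<ge> 0"
  shows "ennreal ((1+t) powr (-e)) \<le> (\<Sum>k. ennreal (2 powr e * (2 powr (-e))^k) * indicator {..<2^k} t)"
proof -
  have ex: "\<exists>k::nat. t < 2^k" using real_arch_pow[of 2 t] by auto
  define k where "k = (LEAST k::nat. t < 2^k)"
  have tk: "t < 2^k" unfolding k_def using LeastI_ex[OF ex] .
  have bnd: "(1+t) powr (-e) \<le> 2 powr e * (2 powr (-e))^k"
  proof (cases k)
    case 0
    have "(1+t) powr (-e) \<le> 1" using powr_mono2'[of "-e" 1 "1+t"] t e by simp
    also have "1 \<le> 2 powr e" using e ge_one_powr_ge_zero[of 2 e] by simp
    finally show ?thesis using 0 by simp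
  next
    case (Suc m)
    have "\<not> t < 2^m" unfolding k_def
      using not_less_Least[of m "\<lambda>k. t < 2^k"] Suc k_def by auto
    then have m: "2^m \<le> t" by simp
    have "(1+t) powr (-e) \<le> (2^m) powr (-e)"
      using m e by (intro powr_mono2') auto
    also have "(2^m) powr (-e) = 2 powr e * (2 powr (-e))^k"
    proof -
      have "((2::real)^m) powr (-e) = (2 powr real m) powr (-e)" by (simp add: powr_realpow)
      also have "\<dots> = 2 powr (real m * (-e))" by (simp add: powr_powr)
      also have "\<dots> = 2 powr e * 2 powr (real (Suc m) * (-e))" by (simp add: powr_add[symmetric] algebra_simps)
      also have "\<dots> = 2 powr e * (2 powr (-e))^(Suc m)" by (simp only: powr_power[of 2])
      finally show ?thesis using Suc by simp
    qed
    finally show ?thesis .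
  qed
  have "ennreal ((1+t) powr (-e)) \<le> ennreal (2 powr e * (2 powr (-e))^k) * indicator {..<2^k} t"
    using bnd tk by (auto intro: ennreal_leI)
  also have "\<dots> = (\<Sum>i\<in>{k}. ennreal (2 powr e * (2 powr (-e))^i) * indicator {..<2^i} t)"
    by (simp only: sum.empty sum.insert finite.emptyI empty_iff not_False_eq_True add_0_right)
  also have "\<dots> \<le> (\<Sum>i. ennreal (2 powr e * (2 powr (-e))^i) * indicator {..<2^i} t)"
    by (intro sum_le_suminf) auto
  finally show ?thesis .
qed

lemma pow2_powr: "(((2::real)^k)^m) powr t = (2 powr (real m * t))^k"
proof -
  have "((2::real)^k)^m = 2^(k*m)" by (simp add: power_mult)
  also have "\<dots> = 2 powr (real (k*m))" by (simp only: powr_realpow[symmetric])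
  finally have "((2::real)^k)^m = 2 powr (real (k*m))" .
  then have "(((2::real)^k)^m) powr t = 2 powr (real k * (real m * t))" by (simp add: powr_powr mult.assoc)
  also have "\<dots> = (2 powr (real m * t))^k" by (simp add: powr_power)
  finally show ?thesis .
qed

lemma interp_min:
  fixes X Y t :: real
  assumes "0 \<le> X" "0 \<le> Y" "0 \<le> t" "t \<le> 1"
  shows "min X Y \<le> X powr (1 - t) * Y powr t"
proof (cases "X = 0 \<or> Y = 0")
  case True then show ?thesis using assms by auto
next
  case False
  then have XY: "X > 0" "Y > 0" using assms by auto
  show ?thesis
  proof (cases "X \<le> Y")
    case True
    have "min X Y = X powr (1 - t) * X powr t" using XY True by (simp add: powr_add[symmetric])
    also have "\<dots> \<le> X powr (1 - t) * Y powr t" using XY True assms by (intro mult_left_mono powr_mono2) auto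
    finally show ?thesis .
  next
    case False
    have "min X Y = Y powr (1 - t) * Y powr t" using XY False by (simp add: powr_add[symmetric])
    also have "\<dots> \<le> X powr (1 - t) * Y powr t" using XY False assms by (intro mult_right_mono powr_mono2) auto
    finally show ?thesis .
  qed
qed

lemma set_meas_bound:
  fixes q p :: "'a::euclidean_space" and \<sigma> d :: real and k j :: nat
  assumes N: "DIM('a) \<ge> 2" and s0: "0 < \<sigma>" and s1: "\<sigma> < 1"
  shows "emeasure lborel (ball q (2^k) \<inter> {z. \<bar>2*(norm(z-p))^2 + d\<bar> < 2^j})
    \<le> ennreal ((unit_ball_vol DIM('a)) powr (1-\<sigma>) * (DIM('a) * 2^DIM('a) * sqrt DIM('a)) powr \<sigma>
         * (2 powr (DIM('a) - 2*\<sigma>))^k * (2 powr \<sigma>)^j)"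
proof -
  define n where "n = DIM('a)"
  define \<omega> where "\<omega> = unit_ball_vol n"
  define C where "C = real (n * 2^n) * sqrt n"
  define X where "X = \<omega> * (2^k)^n"
  define Y where "Y = C * 2^j * (2^k)^(n-2)"
  define E where "E = ball q (2^k) \<inter> {z. \<bar>2*(norm(z-p))^2 + d\<bar> < (2::real)^j}"
  have om: "\<omega> \<ge> 0" unfolding \<omega>_def by simp
  have C0: "C \<ge> 0" unfolding C_def by simp
  have X0: "X \<ge> 0" "Y \<ge> 0" unfolding X_def Y_def using om C0 by auto
  have E1: "emeasure lborel E \<le> ennreal X"
  proof -
    have "emeasure lborel E \<le> emeasure lborel (ball q (2^k))" unfolding E_def
      by (intro emeasure_mono) auto
    also have "\<dots> = ennreal X" unfolding X_def \<omega>_def n_def by (subst emeasure_ball) auto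
    finally show ?thesis .
  qed
  have E2: "emeasure lborel E \<le> ennreal Y"
  proof -
    define a' where "a' = (-(2^j) - d)/(2::real)"
    have "E \<subseteq> cball q (2^k) \<inter> {z. a' < (norm (z - p))^2 \<and> (norm (z - p))^2 < a' + 2^j}"
      unfolding E_def a'_def by (auto simp: field_simps abs_less_iff)
    then have "emeasure lborel E \<le> emeasure lborel (cball q (2^k) \<inter> {z. a' < (norm (z - p))^2 \<and> (norm (z - p))^2 < a' + 2^j})"
      by (intro emeasure_mono) auto
    also have "\<dots> \<le> ennreal (DIM('a) * 2^DIM('a) * sqrt DIM('a) * 2^j * (2^k) ^ (DIM('a) - 2))"
      using N by (intro shell_measure) auto
    also have "\<dots> = ennreal Y" unfolding Y_def C_def n_def by (simp add: mult.assoc)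
    finally show ?thesis .
  qed
  have "emeasure lborel E \<le> ennreal (min X Y)" using E1 E2 by (simp add: min_def)
  also have "\<dots> \<le> ennreal (X powr (1-\<sigma>) * Y powr \<sigma>)"
    using X0 s0 s1 by (intro ennreal_leI interp_min) auto
  also have "X powr (1-\<sigma>) * Y powr \<sigma> = \<omega> powr (1-\<sigma>) * C powr \<sigma> * (2 powr (n - 2*\<sigma>))^k * (2 powr \<sigma>)^j"
  proof -
    have nn: "real (n - 2) = real n - 2" using N unfolding n_def by simp
    have h1: "X powr (1-\<sigma>) = \<omega> powr (1-\<sigma>) * (2 powr (real n * (1-\<sigma>)))^k"
      unfolding X_def using om by (simp add: powr_mult pow2_powr)
    have h2: "Y powr \<sigma> = C powr \<sigma> * (2 powr \<sigma>)^j * (2 powr ((real n - 2) * \<sigma>))^k"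
    proof -
      have "Y powr \<sigma> = C powr \<sigma> * (((2::real)^j)^1) powr \<sigma> * (((2::real)^k)^(n-2)) powr \<sigma>"
        unfolding Y_def using C0 by (simp add: powr_mult)
      also have "\<dots> = C powr \<sigma> * (2 powr \<sigma>)^j * (2 powr ((real n - 2) * \<sigma>))^k"
        unfolding pow2_powr nn by simp
      finally show ?thesis .
    qed
    have h3: "(2 powr (real n * (1-\<sigma>)))^k * (2 powr ((real n - 2) * \<sigma>))^k = (2 powr (n - 2*\<sigma>))^k"
      by (simp add: power_mult_distrib[symmetric] powr_add[symmetric] algebra_simps)
    have "X powr (1-\<sigma>) * Y powr \<sigma> = (\<omega> powr (1-\<sigma>) * C powr \<sigma>) *
       ((2 powr (real n * (1-\<sigma>)))^k * (2 powr ((real n - 2) * \<sigma>))^k) * (2 powr \<sigma>)^j"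
      unfolding h1 h2 by (simp only: ac_simps)
    then show ?thesis unfolding h3 by simp
  qed
  finally show ?thesis unfolding E_def \<omega>_def C_def n_def .
qed

lemma zeta_bound:
  fixes a \<beta> :: real
  assumes N: "DIM('a::euclidean_space) \<ge> 2" and b0: "0 < \<beta>" and b1: "\<beta> < 1" and a0: "0 \<le> a"
    and na: "real DIM('a) < a + 2*\<beta>"
  shows "\<exists>K. \<forall>(q::'a) p d. (\<integral>\<^sup>+z. ennreal ((1 + norm (z - q)) powr (-a) *
          (1 + \<bar>2*(norm (z-p))^2 + d\<bar>) powr (-\<beta>)) \<partial>lborel) \<le> ennreal K"
proof -
  define n where "n = real DIM('a)"
  define \<sigma> where "\<sigma> = (max 0 ((n - a)/2) + \<beta>)/2"
  have s0: "0 < \<sigma>" and sb: "\<sigma> < \<beta>" and sn: "n - 2*\<sigma> - a < 0"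
    using b0 na unfolding \<sigma>_def n_def by (auto simp: max_def field_simps)
  have s1: "\<sigma> < 1" using sb b1 by simp
  define M0 where "M0 = (unit_ball_vol DIM('a)) powr (1-\<sigma>) * (DIM('a) * 2^DIM('a) * sqrt DIM('a)) powr \<sigma>"
  have M00: "M0 \<ge> 0" unfolding M0_def by simp
  define x where "x = (2::real) powr (n - 2*\<sigma> - a)"
  define y where "y = (2::real) powr (\<sigma> - \<beta>)"
  have x01: "0 \<le> x" "x < 1" unfolding x_def using sn by (auto intro: powr_less_one)
  have y01: "0 \<le> y" "y < 1" unfolding y_def using sb by (auto intro: powr_less_one)
  define P where "P = 2 powr a * 2 powr \<beta> * M0"
  have P0: "P \<ge> 0" unfolding P_def using M00 by simp
  have xe: "(2::real) powr (-a) * 2 powr (n - 2*\<sigma>) = x"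
  proof -
    have "n - 2*\<sigma> - a = -a + (n - 2*\<sigma>)" by simp
    then show ?thesis unfolding x_def by (simp only: powr_add)
  qed
  have ye: "(2::real) powr (-\<beta>) * 2 powr \<sigma> = y"
  proof -
    have "\<sigma> - \<beta> = -\<beta> + \<sigma>" by simp
    then show ?thesis unfolding y_def by (simp only: powr_add)
  qed
  show ?thesis
  proof (intro exI allI)
    fix q p :: 'a and d :: real
    define u where "u = (\<lambda>k::nat. 2 powr a * (2 powr (-a))^k)"
    define v where "v = (\<lambda>k::nat. 2 powr \<beta> * (2 powr (-\<beta>))^k)"
    define E where "E = (\<lambda>k j::nat. ball q (2^k) \<inter> {z. \<bar>2*(norm(z-p))^2 + d\<bar> < (2::real)^j})"
    have u0: "u k \<ge> 0" "v k \<ge> 0" for k unfolding u_def v_def by auto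
    have Es[measurable]: "E k j \<in> sets lborel" for k j unfolding E_def by measurable
    define G where "G = (\<lambda>k j z. ennreal (u k * v j) * indicator (E k j) z)"
    have Gm[measurable]: "G k j \<in> borel_measurable lborel" for k j unfolding G_def by measurable
    have pw: "ennreal ((1 + norm (z - q)) powr (-a) * (1 + \<bar>2*(norm (z-p))^2 + d\<bar>) powr (-\<beta>))
       \<le> (\<Sum>k. \<Sum>j. G k j z)" for z
    proof -
      have A: "ennreal ((1 + norm (z - q)) powr (-a)) \<le> (\<Sum>k. ennreal (u k) * indicator {..<2^k} (norm (z - q)))"
        unfolding u_def using a0 by (intro dyadic_bound) auto
      have B: "ennreal ((1 + \<bar>2*(norm (z-p))^2 + d\<bar>) powr (-\<beta>)) \<le>
          (\<Sum>j. ennreal (v j) * indicator {..<2^j} \<bar>2*(norm (z-p))^2 + d\<bar>)"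
        unfolding v_def using b0 by (intro dyadic_bound) auto
      have "ennreal ((1 + norm (z - q)) powr (-a) * (1 + \<bar>2*(norm (z-p))^2 + d\<bar>) powr (-\<beta>))
         = ennreal ((1 + norm (z - q)) powr (-a)) * ennreal ((1 + \<bar>2*(norm (z-p))^2 + d\<bar>) powr (-\<beta>))"
        by (intro ennreal_mult) auto
      also have "\<dots> \<le> (\<Sum>k. ennreal (u k) * indicator {..<2^k} (norm (z - q))) *
          (\<Sum>j. ennreal (v j) * indicator {..<2^j} \<bar>2*(norm (z-p))^2 + d\<bar>)"
        by (intro mult_mono A B) auto
      also have "\<dots> = (\<Sum>k. ennreal (u k) * indicator {..<2^k} (norm (z - q)) *
          (\<Sum>j. ennreal (v j) * indicator {..<2^j} \<bar>2*(norm (z-p))^2 + d\<bar>))"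
        by (rule ennreal_suminf_multc[symmetric])
      also have "\<dots> = (\<Sum>k. \<Sum>j. ennreal (u k) * indicator {..<2^k} (norm (z - q)) *
          (ennreal (v j) * indicator {..<2^j} \<bar>2*(norm (z-p))^2 + d\<bar>))"
        by (rule suminf_cong, rule ennreal_suminf_cmult[symmetric])
      also have "\<dots> = (\<Sum>k. \<Sum>j. G k j z)"
        unfolding G_def E_def using u0
        by (intro suminf_cong) (auto simp: indicator_def dist_norm norm_minus_commute ennreal_mult)
      finally show ?thesis .
    qed
    have "(\<integral>\<^sup>+z. ennreal ((1 + norm (z - q)) powr (-a) * (1 + \<bar>2*(norm (z-p))^2 + d\<bar>) powr (-\<beta>)) \<partial>lborel)
        \<le> (\<integral>\<^sup>+z. (\<Sum>k. \<Sum>j. G k j z) \<partial>lborel)"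
      by (intro nn_integral_mono pw)
    also have "\<dots> = (\<Sum>k. \<integral>\<^sup>+z. (\<Sum>j. G k j z) \<partial>lborel)"
      by (intro nn_integral_suminf) measurable
    also have "\<dots> = (\<Sum>k. \<Sum>j. \<integral>\<^sup>+z. G k j z \<partial>lborel)"
      by (intro suminf_cong nn_integral_suminf) measurable
    also have "\<dots> = (\<Sum>k. \<Sum>j. ennreal (u k * v j) * emeasure lborel (E k j))"
      unfolding G_def by (intro suminf_cong nn_integral_cmult_indicator Es)
    also have "\<dots> \<le> (\<Sum>k. \<Sum>j. ennreal ((P * x^k) * y^j))"
    proof (intro suminf_le summableI allI)
      fix k j :: nat
      have "ennreal (u k * v j) * emeasure lborel (E k j) \<le>
          ennreal (u k * v j) * ennreal (M0 * (2 powr (n - 2*\<sigma>))^k * (2 powr \<sigma>)^j)"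
        unfolding E_def M0_def n_def by (intro mult_left_mono set_meas_bound N s0 s1) auto
      also have "\<dots> = ennreal (u k * v j * (M0 * (2 powr (n - 2*\<sigma>))^k * (2 powr \<sigma>)^j))"
        using u0 M00 by (intro ennreal_mult[symmetric]) auto
      also have "u k * v j * (M0 * (2 powr (n - 2*\<sigma>))^k * (2 powr \<sigma>)^j)
          = 2 powr a * 2 powr \<beta> * M0 * ((2 powr (-a))^k * (2 powr (n - 2*\<sigma>))^k) * ((2 powr (-\<beta>))^j * (2 powr \<sigma>)^j)"
        unfolding u_def v_def by (simp only: ac_simps)
      also have "\<dots> = (P * x^k) * y^j"
        unfolding P_def power_mult_distrib[symmetric] xe ye by (simp only: ac_simps)
      finally show "ennreal (u k * v j) * emeasure lborel (E k j) \<le> ennreal ((P * x^k) * y^j)" .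
    qed
    also have "\<dots> = (\<Sum>k. ennreal (P / (1 - y) * x^k))"
    proof (intro suminf_cong)
      fix k
      have "(\<Sum>j. ennreal ((P * x^k) * y^j)) = ennreal ((P * x^k) / (1 - y))"
        using P0 x01 y01 by (intro geom_ennreal) auto
      then show "(\<Sum>j. ennreal ((P * x^k) * y^j)) = ennreal (P / (1 - y) * x^k)" by simp
    qed
    also have "\<dots> = ennreal (P / (1 - y) / (1 - x))"
      using P0 x01 y01 by (intro geom_ennreal) auto
    finally show "(\<integral>\<^sup>+z. ennreal ((1 + norm (z - q)) powr (-a) * (1 + \<bar>2*(norm (z-p))^2 + d\<bar>) powr (-\<beta>)) \<partial>lborel)
        \<le> ennreal (P / (1 - y) / (1 - x))" .
  qed
qed

lemma int_1d:
  fixes \<delta> :: real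
  assumes d: "\<delta> > 1"
  shows "(\<integral>\<^sup>+t. ennreal ((1 + \<bar>t\<bar>) powr (-\<delta>)) \<partial>lborel) \<le> ennreal (2 * 2 powr \<delta> / (1 - 2 powr (1 - \<delta>)))"
proof -
  define u where "u = (\<lambda>k::nat. 2 powr \<delta> * (2 powr (-\<delta>))^k)"
  define x where "x = (2::real) powr (1 - \<delta>)"
  have x01: "0 \<le> x" "x < 1" unfolding x_def using d by (auto intro: powr_less_one)
  have xe: "(2::real) powr (-\<delta>) * 2 = x"
  proof -
    have "1 - \<delta> = -\<delta> + 1" by simp
    then show ?thesis unfolding x_def by (simp only: powr_add) simp
  qed
  have "(\<integral>\<^sup>+t. ennreal ((1 + \<bar>t\<bar>) powr (-\<delta>)) \<partial>lborel)
      \<le> (\<integral>\<^sup>+t. (\<Sum>k. ennreal (u k) * indicator {..<(2::real)^k} \<bar>t\<bar>) \<partial>lborel)"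
    unfolding u_def using d by (intro nn_integral_mono dyadic_bound) auto
  also have "\<dots> = (\<integral>\<^sup>+t. (\<Sum>k. ennreal (u k) * indicator {-((2::real)^k)<..<2^k} t) \<partial>lborel)"
    by (intro nn_integral_cong suminf_cong) (auto simp: indicator_def abs_less_iff)
  also have "\<dots> = (\<Sum>k. \<integral>\<^sup>+t. ennreal (u k) * indicator {-((2::real)^k)<..<2^k} t \<partial>lborel)"
    by (intro nn_integral_suminf) measurable
  also have "\<dots> = (\<Sum>k. ennreal (u k) * ennreal (2 * 2^k))"
    by (intro suminf_cong) (simp add: nn_integral_cmult_indicator)
  also have "\<dots> = (\<Sum>k. ennreal ((2 * 2 powr \<delta>) * x^k))"
  proof (intro suminf_cong)
    fix k :: nat
    have "u k * (2 * 2^k) = (2 * 2 powr \<delta>) * ((2 powr (-\<delta>))^k * 2^k)" unfolding u_def by (simp only: ac_simps)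
    also have "\<dots> = (2 * 2 powr \<delta>) * x^k" unfolding power_mult_distrib[symmetric] xe ..
    finally have eq: "u k * (2 * 2^k) = (2 * 2 powr \<delta>) * x^k" .
    have "ennreal (u k) * ennreal (2 * 2^k) = ennreal (u k * (2 * 2^k))"
      by (rule ennreal_mult[symmetric]) (auto simp: u_def)
    then show "ennreal (u k) * ennreal (2 * 2^k) = ennreal ((2 * 2 powr \<delta>) * x^k)"
      using eq by simp
  qed
  also have "\<dots> = ennreal (2 * 2 powr \<delta> / (1 - x))" using x01 by (intro geom_ennreal) auto
  finally show ?thesis unfolding x_def .
qed

lemma int_1d_shift:
  fixes \<delta> c :: real
  assumes d: "\<delta> > 1" and s: "s = 1 \<or> s = -1"
  shows "(\<integral>\<^sup>+t. ennreal ((1 + \<bar>c + s * t\<bar>) powr (-\<delta>)) \<partial>lborel) \<le> ennreal (2 * 2 powr \<delta> / (1 - 2 powr (1 - \<delta>)))"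
proof -
  have "(\<integral>\<^sup>+t. ennreal ((1 + \<bar>t\<bar>) powr (-\<delta>)) \<partial>lborel) =
      \<bar>s\<bar> * (\<integral>\<^sup>+t. ennreal ((1 + \<bar>c + s * t\<bar>) powr (-\<delta>)) \<partial>lborel)"
    using s by (intro nn_integral_real_affine) auto
  then have "(\<integral>\<^sup>+t. ennreal ((1 + \<bar>c + s * t\<bar>) powr (-\<delta>)) \<partial>lborel) = (\<integral>\<^sup>+t. ennreal ((1 + \<bar>t\<bar>) powr (-\<delta>)) \<partial>lborel)"
    using s by auto
  then show ?thesis using int_1d[OF d] by simp
qed

lemma pointwise_tau:
  fixes A B D \<alpha> \<beta> \<delta> :: real
  assumes A: "A \<ge> 1" and B: "B \<ge> 1" and D: "D \<ge> 1" "D \<le> A + B"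
    and b: "0 \<le> \<beta>" and bd: "\<beta> + \<delta> = 2 * \<alpha>" and ad: "\<alpha> \<le> \<delta>"
  shows "1 / (A powr \<alpha> * B powr \<alpha>) \<le> 2 powr \<beta> * D powr (-\<beta>) * (A powr (-\<delta>) + B powr (-\<delta>))"
proof -
  have main: "1 / (X powr \<alpha> * Y powr \<alpha>) \<le> 2 powr \<beta> * D powr (-\<beta>) * Y powr (-\<delta>)"
    if XY: "Y \<le> X" "Y \<ge> 1" "D \<le> 2 * X" for X Y
  proof -
    have X1: "X \<ge> 1" using XY by simp
    define \<gamma> where "\<gamma> = \<alpha> - \<beta>"
    have g: "\<gamma> \<ge> 0" "\<delta> = \<alpha> + \<gamma>" "\<beta> = \<alpha> - \<gamma>" using bd ad unfolding \<gamma>_def by auto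
    have "D powr \<beta> \<le> (2 * X) powr \<beta>" using XY D b by (intro powr_mono2) auto
    also have "\<dots> = 2 powr \<beta> * X powr \<beta>" using X1 by (simp add: powr_mult)
    finally have Db: "D powr \<beta> \<le> 2 powr \<beta> * X powr \<beta>" .
    have Yg: "Y powr \<gamma> \<le> X powr \<gamma>" using XY g by (intro powr_mono2) auto
    have "X powr \<beta> * Y powr \<delta> = X powr \<beta> * Y powr \<gamma> * Y powr \<alpha>"
      using g by (simp add: powr_add)
    also have "\<dots> \<le> X powr \<beta> * X powr \<gamma> * Y powr \<alpha>"
      using Yg by (intro mult_right_mono mult_left_mono) auto
    also have "X powr \<beta> * X powr \<gamma> = X powr \<alpha>" using g by (simp add: powr_add[symmetric])
    finally have K: "X powr \<beta> * Y powr \<delta> \<le> X powr \<alpha> * Y powr \<alpha>" .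
    have "D powr \<beta> * Y powr \<delta> \<le> (2 powr \<beta> * X powr \<beta>) * Y powr \<delta>"
      using Db by (intro mult_right_mono) auto
    also have "\<dots> = 2 powr \<beta> * (X powr \<beta> * Y powr \<delta>)" by (simp add: mult.assoc)
    also have "\<dots> \<le> 2 powr \<beta> * (X powr \<alpha> * Y powr \<alpha>)" using K by (intro mult_left_mono) auto
    finally have "D powr \<beta> * Y powr \<delta> \<le> 2 powr \<beta> * (X powr \<alpha> * Y powr \<alpha>)" .
    moreover have "D powr \<beta> > 0" "Y powr \<delta> > 0" "X powr \<alpha> > 0" "Y powr \<alpha> > 0" using D XY X1 by auto
    ultimately show ?thesis by (simp add: powr_minus field_simps)
  qed
  have pos: "A powr (-\<delta>) \<ge> 0" "B powr (-\<delta>) \<ge> 0" "2 powr \<beta> * D powr (-\<beta>) \<ge> 0" by auto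
  show ?thesis
  proof (cases "B \<le> A")
    case True
    then have "1 / (A powr \<alpha> * B powr \<alpha>) \<le> 2 powr \<beta> * D powr (-\<beta>) * B powr (-\<delta>)"
      using main[of B A] B D by auto
    also have "\<dots> \<le> 2 powr \<beta> * D powr (-\<beta>) * (A powr (-\<delta>) + B powr (-\<delta>))"
      using pos by (intro mult_left_mono) auto
    finally show ?thesis .
  next
    case False
    then have "1 / (A powr \<alpha> * B powr \<alpha>) \<le> 2 powr \<beta> * D powr (-\<beta>) * A powr (-\<delta>)"
      using main[of A B] A D by (auto simp: mult.commute)
    also have "\<dots> \<le> 2 powr \<beta> * D powr (-\<beta>) * (A powr (-\<delta>) + B powr (-\<delta>))"
      using pos by (intro mult_left_mono) auto
    finally show ?thesis .
  qed
qed

lemma pointwise_W: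
  fixes x y s :: real
  assumes "x \<ge> 1" "y \<ge> 1" "s \<ge> 0"
  shows "x powr (-s) * y powr (-s) \<le> x powr (-(2 * s)) + y powr (-(2 * s))"
proof (cases "x \<le> y")
  case True
  have "y powr (-s) \<le> x powr (-s)" using assms True by (intro powr_mono2') auto
  then have "x powr (-s) * y powr (-s) \<le> x powr (-s) * x powr (-s)" using assms by (intro mult_left_mono) auto
  also have "\<dots> = x powr (-(2 * s))" using assms by (simp add: powr_add[symmetric])
  finally show ?thesis using assms by (smt (verit) powr_ge_zero)
next
  case False
  have "x powr (-s) \<le> y powr (-s)" using assms False by (intro powr_mono2') auto
  then have "x powr (-s) * y powr (-s) \<le> y powr (-s) * y powr (-s)" using assms by (intro mult_right_mono) auto
  also have "\<dots> = y powr (-(2 * s))" using assms by (simp add: powr_add[symmetric])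
  finally show ?thesis using assms by (smt (verit) powr_ge_zero)
qed

lemma norm_sum_sq_identity:
  fixes \<xi> \<zeta> :: "'a::real_inner"
  shows "(norm \<zeta>)^2 + (norm (\<xi> - \<zeta>))^2 = 2 * (norm (\<zeta> - (1/2) *\<^sub>R \<xi>))^2 + (norm \<xi>)^2 / 2"
  by (simp add: power2_norm_eq_inner inner_diff_left inner_diff_right inner_commute algebra_simps)

theorem lemma6p5:
  fixes s \<rho> :: real
  assumes "CARD('n::finite) \<ge> 2"
    and "s > real CARD('n) / 2 - 1"
    and "max (1/4) (real CARD('n) / 8 + 1/4 - s / 4) < \<rho>"
    and "\<rho> < 1/2"
  shows "\<exists>C::real. \<forall>(\<xi>::real ^ 'n) (\<tau>::real). Theta2 s \<rho> \<xi> \<tau> \<le> ennreal C"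
proof -
  define N where "N = real CARD('n)"
  have N2: "N \<ge> 2" using assms(1) unfolding N_def by simp
  have r14: "\<rho> > 1/4" and rN: "\<rho> > N/8 + 1/4 - s/4" using assms(3) unfolding N_def by auto
  have sN: "s > N/2 - 1" using assms(2) unfolding N_def by simp
  have s0: "s \<ge> 0" using sN N2 by simp
  define \<beta> where "\<beta> = (max 0 (N/2 - s) + (4*\<rho> - 1))/2"
  define \<delta> where "\<delta> = 4*\<rho> - \<beta>"
  have b0: "0 < \<beta>" and b1: "\<beta> < 4*\<rho> - 1" and bN: "N/2 - s < \<beta>"
    using r14 rN unfolding \<beta>_def by (auto simp: max_def field_simps)
  have bl1: "\<beta> < 1" using b1 assms(4) by simp
  have d1: "\<delta> > 1" using b1 unfolding \<delta>_def by simp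
  have d2: "2*\<rho> \<le> \<delta>" using b1 assms(4) unfolding \<delta>_def by simp
  have DIMn: "DIM(real^'n) = CARD('n)" by simp
  obtain K where K: "\<And>(q::real^'n) p d. (\<integral>\<^sup>+z. ennreal ((1 + norm (z - q)) powr (-(2 * s)) *
          (1 + \<bar>2*(norm (z-p))^2 + d\<bar>) powr (-\<beta>)) \<partial>lborel) \<le> ennreal K"
    using zeta_bound[where 'a="real^'n" and a="2 * s" and \<beta>=\<beta>] assms(1) b0 bl1 s0 bN
    unfolding DIMn N_def by (auto simp: field_simps)
  define K0 where "K0 = max K 0"
  have K0: "ennreal K \<le> ennreal K0" "K0 \<ge> 0" unfolding K0_def by (auto intro: ennreal_leI)
  define I where "I = 2 * 2 powr \<delta> / (1 - 2 powr (1 - \<delta>))"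
  have I0: "I \<ge> 0"
  proof -
    have "2 powr (1 - \<delta>) < (1::real)" using d1 by (intro powr_less_one) auto
    then show ?thesis unfolding I_def by simp
  qed
  have int1: "(\<integral>\<^sup>+t. ennreal ((1 + \<bar>c + sg * t\<bar>) powr (-\<delta>)) \<partial>lborel) \<le> ennreal I"
    if "sg = 1 \<or> sg = -1" for c sg
    unfolding I_def using d1 that by (rule int_1d_shift)
  show ?thesis
  proof (intro exI allI)
    fix \<xi> :: "real^'n" and \<tau> :: real
    define W where "W = (\<lambda>\<zeta>::real^'n. (1 + norm \<zeta>) powr (-s) * (1 + norm (\<xi> - \<zeta>)) powr (-s))"
    define p0 where "p0 = (1/2) *\<^sub>R \<xi>"
    define d0 where "d0 = \<tau> + (norm \<xi>)^2 / 2"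
    define Dz where "Dz = (\<lambda>\<zeta>::real^'n. 1 + \<bar>2*(norm (\<zeta> - p0))^2 + d0\<bar>)"
    define H where "H = (\<lambda>\<zeta>. W \<zeta> * Dz \<zeta> powr (-\<beta>))"
    define G where "G = (\<lambda>(\<zeta>::real^'n) (t::real). 2 powr \<beta> * H \<zeta> *
        ((1 + \<bar>(norm \<zeta>)^2 + 1 * t\<bar>) powr (-\<delta>) + (1 + \<bar>(\<tau> + (norm (\<xi> - \<zeta>))^2) + (-1) * t\<bar>) powr (-\<delta>)))"
    have W0: "W \<zeta> \<ge> 0" for \<zeta> unfolding W_def by simp
    have H0: "H \<zeta> \<ge> 0" for \<zeta> unfolding H_def using W0 by simp
    have Dz_eq: "Dz \<zeta> = 1 + \<bar>\<tau> + (norm \<zeta>)^2 + (norm (\<xi> - \<zeta>))^2\<bar>" for \<zeta>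
      unfolding Dz_def p0_def d0_def using norm_sum_sq_identity[of \<zeta> \<xi>] by (simp add: algebra_simps)
    have pw: "Theta2_integrand s \<rho> \<xi> \<tau> (\<zeta>, t) \<le> G \<zeta> t" for \<zeta> t
    proof -
      define A where "A = 1 + \<bar>t + (norm \<zeta>)^2\<bar>"
      define B where "B = 1 + \<bar>\<tau> - t + (norm (\<xi> - \<zeta>))^2\<bar>"
      have AB: "A \<ge> 1" "B \<ge> 1" "Dz \<zeta> \<ge> 1" "Dz \<zeta> \<le> A + B"
        unfolding A_def B_def Dz_eq by auto
      have "1 / (A powr (2*\<rho>) * B powr (2*\<rho>)) \<le> 2 powr \<beta> * Dz \<zeta> powr (-\<beta>) * (A powr (-\<delta>) + B powr (-\<delta>))"
        using AB b0 d2 unfolding \<delta>_def by (intro pointwise_tau) auto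
      then have "W \<zeta> * (1 / (A powr (2*\<rho>) * B powr (2*\<rho>))) \<le> W \<zeta> * (2 powr \<beta> * Dz \<zeta> powr (-\<beta>) * (A powr (-\<delta>) + B powr (-\<delta>)))"
        using W0 by (intro mult_left_mono) auto
      moreover have "Theta2_integrand s \<rho> \<xi> \<tau> (\<zeta>, t) = W \<zeta> * (1 / (A powr (2*\<rho>) * B powr (2*\<rho>)))"
        unfolding Theta2_integrand_def W_def A_def B_def Let_def by simp
      moreover have "W \<zeta> * (2 powr \<beta> * Dz \<zeta> powr (-\<beta>) * (A powr (-\<delta>) + B powr (-\<delta>))) = G \<zeta> t"
        unfolding G_def H_def A_def B_def by (simp add: algebra_simps)
      ultimately show ?thesis by simp
    qed
    have Gm: "(\<lambda>p. ennreal (G (fst p) (snd p))) \<in> borel_measurable (lborel \<Otimes>\<^sub>M lborel)"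
      unfolding G_def H_def W_def Dz_def by measurable
    have inner: "(\<integral>\<^sup>+t. ennreal (G \<zeta> t) \<partial>lborel) \<le> ennreal (2 powr \<beta> * H \<zeta>) * ennreal (2 * I)" for \<zeta>
    proof -
      define c where "c = 2 powr \<beta> * H \<zeta>"
      have c0: "c \<ge> 0" unfolding c_def using H0 by simp
      have "(\<integral>\<^sup>+t. ennreal (G \<zeta> t) \<partial>lborel) = (\<integral>\<^sup>+t. ennreal c * (ennreal ((1 + \<bar>(norm \<zeta>)^2 + 1 * t\<bar>) powr (-\<delta>))
           + ennreal ((1 + \<bar>(\<tau> + (norm (\<xi> - \<zeta>))^2) + (-1) * t\<bar>) powr (-\<delta>))) \<partial>lborel)"
        unfolding G_def c_def[symmetric] using c0 by (intro nn_integral_cong) (simp add: ennreal_mult ennreal_plus)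
      also have "\<dots> = ennreal c * ((\<integral>\<^sup>+t. ennreal ((1 + \<bar>(norm \<zeta>)^2 + 1 * t\<bar>) powr (-\<delta>)) \<partial>lborel)
           + (\<integral>\<^sup>+t. ennreal ((1 + \<bar>(\<tau> + (norm (\<xi> - \<zeta>))^2) + (-1) * t\<bar>) powr (-\<delta>)) \<partial>lborel))"
        by (subst nn_integral_cmult) (measurable, subst nn_integral_add, auto)
      also have "\<dots> \<le> ennreal c * (ennreal I + ennreal I)"
        by (intro mult_left_mono add_mono int1) auto
      also have "\<dots> = ennreal c * ennreal (2 * I)" using I0 by (simp add: ennreal_plus[symmetric] del: ennreal_plus)
      finally show ?thesis unfolding c_def .
    qed
    have Hb: "ennreal (H \<zeta>) \<le> ennreal ((1 + norm (\<zeta> - 0)) powr (-(2 * s)) * (1 + \<bar>2*(norm (\<zeta>-p0))^2 + d0\<bar>) powr (-\<beta>))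
        + ennreal ((1 + norm (\<zeta> - \<xi>)) powr (-(2 * s)) * (1 + \<bar>2*(norm (\<zeta>-p0))^2 + d0\<bar>) powr (-\<beta>))" for \<zeta>
    proof -
      have "W \<zeta> \<le> (1 + norm \<zeta>) powr (-(2 * s)) + (1 + norm (\<xi> - \<zeta>)) powr (-(2 * s))"
        unfolding W_def using s0 by (intro pointwise_W) auto
      then have "H \<zeta> \<le> ((1 + norm \<zeta>) powr (-(2 * s)) + (1 + norm (\<xi> - \<zeta>)) powr (-(2 * s))) * Dz \<zeta> powr (-\<beta>)"
        unfolding H_def by (intro mult_right_mono) auto
      then show ?thesis unfolding Dz_def
        by (simp add: ennreal_plus[symmetric] norm_minus_commute algebra_simps del: ennreal_plus)
    qed
    have "Theta2 s \<rho> \<xi> \<tau> = (\<integral>\<^sup>+p. ennreal (Theta2_integrand s \<rho> \<xi> \<tau> p) \<partial>(lborel \<Otimes>\<^sub>M lborel))"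
      unfolding Theta2_def lborel_prod ..
    also have "\<dots> \<le> (\<integral>\<^sup>+p. ennreal (G (fst p) (snd p)) \<partial>(lborel \<Otimes>\<^sub>M lborel))"
      using pw by (intro nn_integral_mono ennreal_leI) (metis prod.collapse)
    also have "\<dots> = (\<integral>\<^sup>+\<zeta>. \<integral>\<^sup>+t. ennreal (G \<zeta> t) \<partial>lborel \<partial>lborel)"
      using lborel.nn_integral_fst[OF Gm] by simp
    also have "\<dots> \<le> (\<integral>\<^sup>+\<zeta>. ennreal (2 powr \<beta> * 2 * I) * ennreal (H \<zeta>) \<partial>lborel)"
    proof (intro nn_integral_mono)
      fix \<zeta> :: "real^'n"
      have "ennreal (2 powr \<beta> * H \<zeta>) * ennreal (2 * I) = ennreal (2 powr \<beta> * 2 * I) * ennreal (H \<zeta>)"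
        using H0 I0 by (simp add: ennreal_mult[symmetric] mult_ac)
      then show "(\<integral>\<^sup>+t. ennreal (G \<zeta> t) \<partial>lborel) \<le> ennreal (2 powr \<beta> * 2 * I) * ennreal (H \<zeta>)"
        using inner[of \<zeta>] by simp
    qed
    also have "\<dots> = ennreal (2 powr \<beta> * 2 * I) * (\<integral>\<^sup>+\<zeta>. ennreal (H \<zeta>) \<partial>lborel)"
      unfolding H_def W_def Dz_def by (intro nn_integral_cmult) measurable
    also have "\<dots> \<le> ennreal (2 powr \<beta> * 2 * I) * (ennreal K0 + ennreal K0)"
    proof (intro mult_left_mono)
      have "(\<integral>\<^sup>+\<zeta>. ennreal (H \<zeta>) \<partial>lborel) \<le>
         (\<integral>\<^sup>+\<zeta>. ennreal ((1 + norm (\<zeta> - 0)) powr (-(2 * s)) * (1 + \<bar>2*(norm (\<zeta>-p0))^2 + d0\<bar>) powr (-\<beta>))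
        + ennreal ((1 + norm (\<zeta> - \<xi>)) powr (-(2 * s)) * (1 + \<bar>2*(norm (\<zeta>-p0))^2 + d0\<bar>) powr (-\<beta>)) \<partial>lborel)"
        by (intro nn_integral_mono Hb)
      also have "\<dots> = (\<integral>\<^sup>+\<zeta>. ennreal ((1 + norm (\<zeta> - 0)) powr (-(2 * s)) * (1 + \<bar>2*(norm (\<zeta>-p0))^2 + d0\<bar>) powr (-\<beta>)) \<partial>lborel)
        + (\<integral>\<^sup>+\<zeta>. ennreal ((1 + norm (\<zeta> - \<xi>)) powr (-(2 * s)) * (1 + \<bar>2*(norm (\<zeta>-p0))^2 + d0\<bar>) powr (-\<beta>)) \<partial>lborel)"
        by (intro nn_integral_add) measurable
      also have "\<dots> \<le> ennreal K0 + ennreal K0"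
        by (intro add_mono order_trans[OF K K0(1)])
      finally show "(\<integral>\<^sup>+\<zeta>. ennreal (H \<zeta>) \<partial>lborel) \<le> ennreal K0 + ennreal K0" .
    qed simp
    also have "\<dots> = ennreal (2 powr \<beta> * 2 * I * (2 * K0))"
      using K0 I0 by (simp add: ennreal_mult[symmetric] ennreal_plus[symmetric] del: ennreal_plus)
    finally show "Theta2 s \<rho> \<xi> \<tau> \<le> ennreal (2 powr \<beta> * 2 * I * (2 * K0))" .
  qed
qed

end
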